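(* For every nonempty $A\subseteq\mathbb R$ with $|A|<\mathfrak c$ we have $\mathfrak{ss}_e=\mathfrak{ss}_l^A=\mathfrak c$, and for every nonempty finite $B\subseteq\mathbb R$ we have $\mathfrak{ss}_e^\perp=(\mathfrak{ss}_l^{B})^\perp=2$.
   Context: $\mathfrak c=2^{\aleph_0}$. Let $\mathfrak S_{cc}$ be the set of all sequences $\mathbf a=\langle a_i:i\in\omega\rangle$ of rational numbers with $a_i\to0$ such that $\sum_i a_i$ is conditionally convergent (converges to a real number, with the positive terms summing to $+\infty$ and the negative terms to $-\infty$). Let $[\omega]^\omega_\omega$ be the set of infinite coinfinite subsets of $\omega$; for such $X$ with increasing enumeration $\langle i_n\rangle$, $\sum_X\mathbf a$ denotes $\sum_n a_{i_n}$. For $A\subseteq\mathbb R$: $\mathfrak{ss}_l^A$ is the least cardinality of $\mathcal X\subseteq[\omega]^\omega_\omega$ such that every $\mathbf a\in\mathfrak S_{cc}$ has some $X\in\mathcal X$ for which $\sum_X\mathbf a$ converges to a limit in $A$; $(\mathfrak{ss}_l^A)^\perp$ is the least cardinality of $\mathcal A\subseteq\mathfrak S_{cc}$ such that no $X\in[\omega]^\omega_\omega$ has $\sum_X\mathbf a$ converging to a limit in $A$ for all $\mathbf a\in\mathcal A$. $\mathfrak{ss}_e$ is the least cardinality of $\mathcal X\subseteq[\omega]^\omega_\omega$ such that every $\mathbf a\in\mathfrak S_{cc}$ has some $X\in\mathcal X$ for which $\sum_X\mathbf a$ converges to the same limit as $\sum\mathbf a$; $\mathfrak{ss}_e^\perp$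 is the least cardinality of $\mathcal A\subseteq\mathfrak S_{cc}$ such that no $X\in[\omega]^\omega_\omega$ has $\sum_X\mathbf a=\sum\mathbf a$ for all $\mathbf a\in\mathcal A$. *)

theory Defs
  imports "HOL-Analysis.Analysis" "HOL-Library.Infinite_Set" "HOL-Library.Equipollence"
begin

definition S_cc :: "(nat \<Rightarrow> rat) set" where
  "S_cc = {a. (\<lambda>i. real_of_rat (a i)) \<longlonglongrightarrow> 0
              \<and> summable (\<lambda>i. real_of_rat (a i))
              \<and> filterlim (\<lambda>n. \<Sum>i<n. max 0 (real_of_rat (a i))) at_top sequentially
              \<and> filterlim (\<lambda>n. \<Sum>i<n. min 0 (real_of_rat (a i))) at_bot sequentially}"

definition infcoinf :: "nat set set" where
  "infcoinf = {X. infinite X \<and> infinite (UNIV - X)}"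

definition subsums :: "(nat \<Rightarrow> rat) \<Rightarrow> nat set \<Rightarrow> real \<Rightarrow> bool" where
  "subsums a X L \<longleftrightarrow> (\<lambda>n. real_of_rat (a (enumerate X n))) sums L"

definition good_l :: "real set \<Rightarrow> nat set set \<Rightarrow> bool" where
  "good_l A \<X> \<longleftrightarrow> \<X> \<subseteq> infcoinf \<and> (\<forall>a\<in>S_cc. \<exists>X\<in>\<X>. \<exists>L\<in>A. subsums a X L)"

definition good_e :: "nat set set \<Rightarrow> bool" where
  "good_e \<X> \<longleftrightarrow> \<X> \<subseteq> infcoinf \<and>
     (\<forall>a\<in>S_cc. \<exists>X\<in>\<X>. subsums a X (\<Sum>i. real_of_rat (a i)))"

definition good_l_perp :: "real set \<Rightarrow> (nat \<Rightarrow> rat) set \<Rightarrow> bool" where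
  "good_l_perp A \<A> \<longleftrightarrow> \<A> \<subseteq> S_cc \<and>
     \<not> (\<exists>X\<in>infcoinf. \<forall>a\<in>\<A>. \<exists>L\<in>A. subsums a X L)"

definition good_e_perp :: "(nat \<Rightarrow> rat) set \<Rightarrow> bool" where
  "good_e_perp \<A> \<longleftrightarrow> \<A> \<subseteq> S_cc \<and>
     \<not> (\<exists>X\<in>infcoinf. \<forall>a\<in>\<A>. subsums a X (\<Sum>i. real_of_rat (a i)))"

definition least_card_is_c :: "('a set \<Rightarrow> bool) \<Rightarrow> bool" where
  "least_card_is_c P \<longleftrightarrow> (\<exists>F. P F \<and> F \<approx> (UNIV :: real set))
                        \<and> (\<forall>F. P F \<longrightarrow> (UNIV :: real set) \<lesssim> F)"

definition least_card_is_2 :: "('a set \<Rightarrow> bool) \<Rightarrow> bool" where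
  "least_card_is_2 P \<longleftrightarrow> (\<exists>F. P F \<and> finite F \<and> card F = 2)
                        \<and> (\<forall>F. P F \<longrightarrow> infinite F \<or> 2 \<le> card F)"

end

theory Submission
  imports Defs "HOL-Analysis.Harmonic_Numbers"
begin
unbundle cardinal_syntax

lemma lepoll_iff_ordLeq: "A \<lesssim> B \<longleftrightarrow> |A| \<le>o |B|"
  unfolding lepoll_def by (rule card_of_ordLeq)

lemma lepoll_total: "A \<lesssim> B \<or> B \<lesssim> A"
  unfolding lepoll_iff_ordLeq by (rule ordLeq_total[OF card_of_Well_order card_of_Well_order])

lemma times_self_lepoll: "infinite A \<Longrightarrow> A \<times> A \<lesssim> A"
  unfolding lepoll_iff_ordLeq by (rule ordIso_imp_ordLeq[OF card_of_Times_same_infinite])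
lemma lepoll_finite: assumes "F \<lesssim> A" "finite A" shows "finite F"
proof (rule ccontr)
  assume "infinite F"
  then have "(UNIV::nat set) \<lesssim> F" by (simp add: infinite_le_lepoll)
  then have "(UNIV::nat set) \<lesssim> A" using assms(1) by (rule lepoll_trans)
  then have "infinite A" by (simp add: infinite_le_lepoll)
  then show False using assms(2) by simp
qed

lemma times_lesspoll:
  assumes F: "F \<prec> R" and A: "A \<prec> R" and R: "infinite R"
  shows "F \<times> A \<prec> R"
proof (cases "F \<lesssim> A")
  case True
  show ?thesis
  proof (cases "finite A")
    case True
    then have "finite F" by (rule lepoll_finite[OF \<open>F \<lesssim> A\<close>])
    then show ?thesis using True R by (simp add: finite_lesspoll_infinite)
  next
    case False
    have "F \<times> A \<lesssim> A \<times> A" using \<open>F \<lesssim> A\<close> by (simp add: times_lepoll_mono)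
    also have "A \<times> A \<lesssim> A" using False by (rule times_self_lepoll)
    finally have "F \<times> A \<lesssim> A" .
    then show ?thesis using A by (rule lesspoll_trans1)
  qed
next
  case False
  then have FA: "A \<lesssim> F" using lepoll_total[of F A] by simp
  show ?thesis
  proof (cases "finite F")
    case True
    then have "finite A" by (rule lepoll_finite[OF FA])
    then show ?thesis using True R by (simp add: finite_lesspoll_infinite)
  next
    case False
    have "F \<times> A \<lesssim> F \<times> F" using FA by (simp add: times_lepoll_mono)
    also have "F \<times> F \<lesssim> F" using False by (rule times_self_lepoll)
    finally have "F \<times> A \<lesssim> F" .
    then show ?thesis using F by (rule lesspoll_trans1)
  qed
qed

definition tern :: "nat set \<Rightarrow> real" where
  "tern K = (\<Sum>k. if k \<in> K then (1/3::real)^k else 0)"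

lemma summable_tern: "summable (\<lambda>k. if k \<in> K then (1/3::real)^k else 0)"
  by (rule summable_comparison_test[where g="\<lambda>k. (1/3::real)^k"]) auto

lemma tern_less:
  assumes m: "m \<in> K" "m \<notin> K'" and lt: "\<And>k. k < m \<Longrightarrow> (k \<in> K \<longleftrightarrow> k \<in> K')"
  shows "tern K' < tern K"
proof -
  define d where "d k = (if k \<in> K then (1/3::real)^k else 0) - (if k \<in> K' then (1/3::real)^k else 0)" for k
  have sd: "summable d" unfolding d_def by (intro summable_diff summable_tern)
  have dsum: "suminf d = tern K - tern K'"
    unfolding d_def tern_def by (rule suminf_diff[OF summable_tern summable_tern, symmetric])
  have "suminf d = (\<Sum>n. d (n + m)) + (\<Sum>i<m. d i)"
    using sd by (rule suminf_split_initial_segment)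
  also have "(\<Sum>i<m. d i) = 0"
  proof (rule sum.neutral, rule ballI)
    fix i assume "i \<in> {..<m}"
    then have "i \<in> K \<longleftrightarrow> i \<in> K'" using lt by simp
    then show "d i = 0" unfolding d_def by simp
  qed
  finally have 1: "suminf d = (\<Sum>n. d (n + m))" by simp
  have sdm: "summable (\<lambda>n. d (n + m))" using sd by (rule summable_ignore_initial_segment)
  have 2: "(\<Sum>n. d (Suc n + m)) = (\<Sum>n. d (n + m)) - d m"
    using suminf_split_head[OF sdm] by simp
  have dm: "d m = (1/3)^m" using m unfolding d_def by simp
  have g: "(\<lambda>n. (1/3::real)^(Suc n + m)) sums ((1/3)^(Suc m) * (3/2))"
  proof -
    have "(\<lambda>n. (1/3::real)^n) sums (1 / (1 - 1/3))" by (rule geometric_sums) simp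
    then have "(\<lambda>n. (1/3::real)^(Suc m) * (1/3)^n) sums ((1/3)^(Suc m) * (1 / (1 - 1/3)))"
      by (rule sums_mult)
    moreover have "(1/3::real)^(Suc m) * (1/3)^n = (1/3::real)^(Suc n + m)" for n
    proof -
      have e: "Suc n + m = Suc m + n" by simp
      show ?thesis unfolding e power_add by (rule refl)
    qed
    ultimately show ?thesis by simp
  qed
  have sd2: "summable (\<lambda>n. d (Suc n + m))"
    using summable_ignore_initial_segment[OF sdm, of 1] by simp
  have "- ((1/3)^(Suc m) * (3/2)) \<le> (\<Sum>n. d (Suc n + m))"
  proof -
    have s1: "(\<lambda>n. - ((1/3::real)^(Suc n + m))) sums (- ((1/3)^(Suc m) * (3/2)))"
      using g by (rule sums_minus)
    have le: "\<And>n. - ((1/3::real)^(Suc n + m)) \<le> d (Suc n + m)"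
      unfolding d_def by simp
    show ?thesis by (rule sums_le[OF le s1 summable_sums[OF sd2]])
  qed
  then have h: "- ((1/3::real)^m / 2) \<le> (\<Sum>n. d (n + m)) - (1/3)^m" using 2 dm by simp
  have "(0::real) < (1/3)^m" by simp
  then have "0 < suminf d" using 1 h by linarith
  then show ?thesis using dsum by simp
qed

lemma tern_inj: "inj tern"
proof (rule injI, rule ccontr)
  fix K K' assume eq: "tern K = tern K'" and ne: "K \<noteq> K'"
  then obtain j where "(j \<in> K) \<noteq> (j \<in> K')" by blast
  define m where "m = (LEAST j. (j \<in> K) \<noteq> (j \<in> K'))"
  have mm: "(m \<in> K) \<noteq> (m \<in> K')" unfolding m_def by (rule LeastI) fact
  have lt: "\<And>k. k < m \<Longrightarrow> (k \<in> K \<longleftrightarrow> k \<in> K')" unfolding m_def using not_less_Least by blast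
  show False
  proof (cases "m \<in> K")
    case True
    then have "m \<notin> K'" using mm by simp
    then have "tern K' < tern K" using tern_less[of m K K', OF True _ lt] by blast
    then show False using eq by simp
  next
    case False
    then have "m \<in> K'" using mm by simp
    then have "tern K < tern K'" using tern_less[of m K' K, OF _ False] lt by blast
    then show False using eq by simp
  qed
qed

lemma natset_lepoll_real: "(F :: nat set set) \<lesssim> (UNIV :: real set)"
  unfolding lepoll_def by (intro exI[of _ tern]) (auto intro: inj_on_subset[OF tern_inj])

definition ind :: "nat set \<Rightarrow> (nat \<Rightarrow> real) \<Rightarrow> nat \<Rightarrow> real" where
  "ind X f i = (if i \<in> X then f i else 0)"

lemma subsums_iff:
  assumes "infinite X"
  shows "subsums a X L \<longleftrightarrow> ind X (\<lambda>i. real_of_rat (a i)) sums L"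
proof -
  have "(\<lambda>n. ind X (\<lambda>i. real_of_rat (a i)) (enumerate X n)) sums L \<longleftrightarrow> ind X (\<lambda>i. real_of_rat (a i)) sums L"
    by (rule sums_mono_reindex) (auto simp: strict_mono_enumerate[OF assms] range_enumerate[OF assms] ind_def)
  moreover have "\<And>n. ind X (\<lambda>i. real_of_rat (a i)) (enumerate X n) = real_of_rat (a (enumerate X n))"
    using enumerate_in_set[OF assms] by (simp add: ind_def)
  ultimately show ?thesis unfolding subsums_def by simp
qed

lemma sum_split_at:
  fixes f :: "nat \<Rightarrow> real"
  assumes "N \<le> n"
  shows "(\<Sum>i<n. f i) = (\<Sum>i<N. f i) + (\<Sum>i\<in>{N..<n}. f i)"
  using sum.atLeastLessThan_concat[of 0 N n f] assms by (simp add: atLeast0LessThan)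

lemma greedy:
  fixes r :: "nat \<Rightarrow> real" and Z :: "nat set" and L :: real
  assumes r0: "r \<longlonglongrightarrow> 0"
    and pos: "filterlim (\<lambda>n. \<Sum>i<n. max 0 (r i)) at_top sequentially"
    and neg: "filterlim (\<lambda>n. \<Sum>i<n. min 0 (r i)) at_bot sequentially"
    and Zs: "summable (\<lambda>i. if i \<in> Z then \<bar>r i\<bar> else 0)"
  shows "\<exists>X. X \<inter> Z = {} \<and> infinite X \<and> (\<lambda>i. if i \<in> X then r i else 0) sums L"
proof -
  define P where "P i v \<longleftrightarrow> i \<notin> Z \<and> ((v < L \<and> 0 < r i) \<or> (L \<le> v \<and> r i \<le> 0))" for i v
  define s where "s = rec_nat 0 (\<lambda>i v. v + (if P i v then r i else 0))"
  have s0: "s 0 = 0" by (simp add: s_def)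
  have sS: "s (Suc i) = s i + (if P i (s i) then r i else 0)" for i by (simp add: s_def)
  define X where "X = {i. P i (s i)}"
  define w where "w i = (if i \<in> Z then \<bar>r i\<bar> else 0)" for i
  define W where "W = suminf w"
  have ws: "summable w" using Zs unfolding w_def .
  have wI: "sum w I \<le> W" if "finite I" for I
    unfolding W_def by (rule sum_le_suminf[OF ws that]) (simp add: w_def)
  have spart: "s n = (\<Sum>i<n. if i \<in> X then r i else 0)" for n
    by (induction n) (simp_all add: s0 sS X_def)
  have key1: "\<not> (\<forall>j\<ge>N. s j < L)" for N
  proof
    assume H: "\<forall>j\<ge>N. s j < L"
    have inc: "s n - s N \<ge> (\<Sum>i\<in>{N..<n}. max 0 (r i) - w i)" if "N \<le> n" for n
      using that
    proof (induction n rule: dec_induct)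
      case base then show ?case by simp
    next
      case (step n)
      have "s n < L" using H step.hyps(1) by simp
      then have "s (Suc n) - s n \<ge> max 0 (r n) - w n"
        unfolding sS P_def w_def by auto
      then show ?case using step.IH step.hyps(1) by (simp add: sum.atLeastLessThan_Suc)
    qed
    define B where "B = L - s N + (\<Sum>i<N. max 0 (r i)) + W + 1"
    have "eventually (\<lambda>n. B \<le> (\<Sum>i<n. max 0 (r i))) sequentially"
      using pos unfolding filterlim_at_top by blast
    then obtain n0 where n0: "\<And>n. n \<ge> n0 \<Longrightarrow> B \<le> (\<Sum>i<n. max 0 (r i))"
      unfolding eventually_sequentially by blast
    define n where "n = max n0 N"
    have nN: "N \<le> n" and nn0: "n0 \<le> n" unfolding n_def by auto
    have a1: "B \<le> (\<Sum>i<n. max 0 (r i))" using n0 nn0 by blast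
    have a2: "(\<Sum>i<n. max 0 (r i)) = (\<Sum>i<N. max 0 (r i)) + (\<Sum>i\<in>{N..<n}. max 0 (r i))"
      using nN by (rule sum_split_at)
    have a3: "(\<Sum>i\<in>{N..<n}. max 0 (r i) - w i) = (\<Sum>i\<in>{N..<n}. max 0 (r i)) - (\<Sum>i\<in>{N..<n}. w i)"
      by (rule sum_subtractf)
    have a4: "(\<Sum>i\<in>{N..<n}. w i) \<le> W" by (rule wI) simp
    have a5: "s n - s N \<ge> (\<Sum>i\<in>{N..<n}. max 0 (r i) - w i)" using inc nN by blast
    have "L < s n" using a1 a2 a3 a4 a5 unfolding B_def by linarith
    then show False using H nN by force
  qed
  have key2: "\<not> (\<forall>j\<ge>N. L \<le> s j)" for N
  proof
    assume H: "\<forall>j\<ge>N. L \<le> s j"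
    have inc: "s n - s N \<le> (\<Sum>i\<in>{N..<n}. min 0 (r i) + w i)" if "N \<le> n" for n
      using that
    proof (induction n rule: dec_induct)
      case base then show ?case by simp
    next
      case (step n)
      have "L \<le> s n" using H step.hyps(1) by simp
      then have "s (Suc n) - s n \<le> min 0 (r n) + w n"
        unfolding sS P_def w_def by auto
      then show ?case using step.IH step.hyps(1) by (simp add: sum.atLeastLessThan_Suc)
    qed
    define B where "B = L - s N + (\<Sum>i<N. min 0 (r i)) - W - 1"
    have "eventually (\<lambda>n. (\<Sum>i<n. min 0 (r i)) \<le> B) sequentially"
      using neg unfolding filterlim_at_bot by blast
    then obtain n0 where n0: "\<And>n. n \<ge> n0 \<Longrightarrow> (\<Sum>i<n. min 0 (r i)) \<le> B"
      unfolding eventually_sequentially by blast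
    define n where "n = max n0 N"
    have nN: "N \<le> n" and nn0: "n0 \<le> n" unfolding n_def by auto
    have a1: "(\<Sum>i<n. min 0 (r i)) \<le> B" using n0 nn0 by blast
    have a2: "(\<Sum>i<n. min 0 (r i)) = (\<Sum>i<N. min 0 (r i)) + (\<Sum>i\<in>{N..<n}. min 0 (r i))"
      using nN by (rule sum_split_at)
    have a3: "(\<Sum>i\<in>{N..<n}. min 0 (r i) + w i) = (\<Sum>i\<in>{N..<n}. min 0 (r i)) + (\<Sum>i\<in>{N..<n}. w i)"
      by (rule sum.distrib)
    have a4: "(\<Sum>i\<in>{N..<n}. w i) \<le> W" by (rule wI) simp
    have a5: "s n - s N \<le> (\<Sum>i\<in>{N..<n}. min 0 (r i) + w i)" using inc nN by blast
    have "s n < L" using a1 a2 a3 a4 a5 unfolding B_def by linarith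
    then show False using H nN by force
  qed
  have key3: "\<exists>j\<ge>N. (s j < L) \<noteq> (s (Suc j) < L)" for N
  proof (rule ccontr)
    assume "\<not> ?thesis"
    then have H: "\<And>j. j \<ge> N \<Longrightarrow> (s (Suc j) < L) = (s j < L)" by blast
    have c: "(s j < L) = (s N < L)" if "N \<le> j" for j
      using that
    proof (induction j rule: dec_induct)
      case base then show ?case by (rule refl)
    next
      case (step n)
      show ?case using H[OF step.hyps(1)] step.IH by (rule trans)
    qed
    obtain j1 where j1: "j1 \<ge> N" "\<not> s j1 < L" using key1[of N] by blast
    obtain j2 where j2: "j2 \<ge> N" "\<not> L \<le> s j2" using key2[of N] by blast
    have "(s j1 < L) = (s N < L)" using c[OF j1(1)] by simp
    moreover have "(s j2 < L) = (s N < L)" using c[OF j2(1)] by simp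
    ultimately show False using j1(2) j2(2) by simp
  qed
  have conv: "s \<longlonglongrightarrow> L"
    unfolding LIMSEQ_iff
  proof (intro allI impI)
    fix e :: real assume e: "0 < e"
    obtain N where N: "\<And>n. n \<ge> N \<Longrightarrow> \<bar>r n\<bar> < e"
      using r0 e unfolding LIMSEQ_iff by auto
    obtain j where j: "j \<ge> N" "(s j < L) \<noteq> (s (Suc j) < L)" using key3 by blast
    have Pj: "P j (s j)"
    proof (rule ccontr)
      assume "\<not> P j (s j)"
      then have "s (Suc j) = s j" by (simp add: sS)
      then show False using j(2) by simp
    qed
    then have sj: "s (Suc j) = s j + r j" by (simp add: sS)
    have rj: "\<bar>r j\<bar> < e" using N j(1) by blast
    have start: "\<bar>s (Suc j) - L\<bar> < e" using j(2) sj rj by (cases "s j < L") auto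
    have inv: "\<bar>s n - L\<bar> < e" if "Suc j \<le> n" for n
      using that
    proof (induction n rule: dec_induct)
      case base then show ?case using start .
    next
      case (step n)
      have rn: "\<bar>r n\<bar> < e" using N step.hyps(1) j(1) by simp
      show ?case using step.IH rn unfolding sS P_def by (auto split: if_splits)
    qed
    then show "\<exists>no. \<forall>n\<ge>no. norm (s n - L) < e" by auto
  qed
  have infX: "infinite X"
  proof
    assume "finite X"
    then obtain N where N: "X \<subseteq> {..<N}" using finite_nat_bounded by blast
    have c: "s j = s N" if "N \<le> j" for j
      using that
    proof (induction j rule: dec_induct)
      case base then show ?case by simp
    next
      case (step n)
      have "n \<notin> X" using N step.hyps(1) by auto
      then show ?case using step.IH by (simp add: sS X_def)
    qed
    obtain j1 where j1: "j1 \<ge> N" "\<not> s j1 < L" using key1[of N] by blast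
    obtain j2 where j2: "j2 \<ge> N" "\<not> L \<le> s j2" using key2[of N] by blast
    have "(s j1 < L) = (s N < L)" using c[OF j1(1)] by simp
    moreover have "(s j2 < L) = (s N < L)" using c[OF j2(1)] by simp
    ultimately show False using j1(2) j2(2) by simp
  qed
  have "X \<inter> Z = {}" unfolding X_def P_def by auto
  moreover have "(\<lambda>i. if i \<in> X then r i else 0) sums L"
  proof -
    have "s = (\<lambda>n. \<Sum>i<n. if i \<in> X then r i else 0)" using spart by (rule ext)
    then show ?thesis unfolding sums_def using conv by simp
  qed
  ultimately show ?thesis using infX by blast
qed

lemma mkZ:
  fixes r :: "nat \<Rightarrow> real"
  assumes r0: "r \<longlonglongrightarrow> 0"
  shows "\<exists>Z. infinite Z \<and> summable (\<lambda>i. if i \<in> Z then \<bar>r i\<bar> else 0)"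
proof -
  have ex: "\<exists>i. m < i \<and> \<bar>r i\<bar> \<le> (1/2)^k" for m k
  proof -
    have "(0::real) < (1/2)^k" by simp
    then obtain N where N: "\<And>n. n \<ge> N \<Longrightarrow> \<bar>r n\<bar> < (1/2)^k"
      using r0 unfolding LIMSEQ_iff by fastforce
    show ?thesis using N[of "max N (Suc m)"] by (intro exI[of _ "max N (Suc m)"]) auto
  qed
  define z where "z = rec_nat (LEAST i. \<bar>r i\<bar> \<le> (1/2)^0) (\<lambda>k zk. LEAST i. zk < i \<and> \<bar>r i\<bar> \<le> (1/2)^(Suc k))"
  have z0: "z 0 = (LEAST i. \<bar>r i\<bar> \<le> (1/2)^0)" by (simp add: z_def)
  have zS: "z (Suc k) = (LEAST i. z k < i \<and> \<bar>r i\<bar> \<le> (1/2)^(Suc k))" for k by (simp add: z_def)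
  have zb: "\<bar>r (z k)\<bar> \<le> (1/2)^k" for k
  proof (cases k)
    case 0
    have "\<exists>i. \<bar>r i\<bar> \<le> (1/2)^0" using ex[of 0 0] by blast
    then show ?thesis unfolding 0 z0 by (rule LeastI_ex)
  next
    case (Suc k')
    have "z k' < z (Suc k') \<and> \<bar>r (z (Suc k'))\<bar> \<le> (1/2)^(Suc k')"
      unfolding zS by (rule LeastI_ex) (rule ex)
    then show ?thesis using Suc by simp
  qed
  have zm: "z k < z (Suc k)" for k
  proof -
    have "z k < z (Suc k) \<and> \<bar>r (z (Suc k))\<bar> \<le> (1/2)^(Suc k)"
      unfolding zS by (rule LeastI_ex) (rule ex)
    then show ?thesis by simp
  qed
  have sm: "strict_mono z" using zm by (simp add: strict_mono_Suc_iff)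
  then have "inj z" by (rule strict_mono_imp_inj_on)
  then have inf: "infinite (range z)" by (rule range_inj_infinite)
  have s1: "summable (\<lambda>k. \<bar>r (z k)\<bar>)"
    by (rule summable_comparison_test[where g="\<lambda>k. (1/2::real)^k"]) (auto intro: zb)
  then obtain c where c: "(\<lambda>k. \<bar>r (z k)\<bar>) sums c" by (auto simp: summable_def)
  have "(\<lambda>k. (\<lambda>i. if i \<in> range z then \<bar>r i\<bar> else 0) (z k)) sums c" using c by simp
  then have "(\<lambda>i. if i \<in> range z then \<bar>r i\<bar> else 0) sums c"
    by (subst (asm) sums_mono_reindex[OF sm]) auto
  then show ?thesis using inf by (auto simp: summable_def)
qed
definition bseq :: "nat \<Rightarrow> rat" where
  "bseq i = (-1)^i / of_nat (Suc i)"

lemma rb: "real_of_rat (bseq i) = (-1)^i / real (Suc i)"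
  unfolding bseq_def by (simp add: of_rat_divide of_rat_power of_rat_add)

lemma mx: "0 \<le> (y::real) \<Longrightarrow> max 0 x \<le> max 0 (x + y)" by (auto simp: max_def)
lemma mn: "0 \<le> (y::real) \<Longrightarrow> min 0 (x + y) \<le> min 0 x + y" by (auto simp: min_def)
lemma mm: "max 0 (x::real) - min 0 x = \<bar>x\<bar>" by (auto simp: max_def min_def)

lemma rb_abs: "\<bar>real_of_rat (bseq i)\<bar> = inverse (real (Suc i))"
  unfolding rb by (simp add: abs_mult power_abs divide_inverse)

lemma rb_pm: "max 0 (real_of_rat (bseq i)) \<ge> - min 0 (real_of_rat (bseq (Suc i)))"
      "- min 0 (real_of_rat (bseq i)) \<ge> max 0 (real_of_rat (bseq (Suc i)))"
proof -
  have le: "1 / real (Suc (Suc i)) \<le> 1 / real (Suc i)"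
    by (rule divide_left_mono) auto
  show "max 0 (real_of_rat (bseq i)) \<ge> - min 0 (real_of_rat (bseq (Suc i)))"
  proof (cases "even i")
    case True
    then show ?thesis unfolding rb using le by simp
  next
    case False
    then show ?thesis unfolding rb by simp
  qed
  show "- min 0 (real_of_rat (bseq i)) \<ge> max 0 (real_of_rat (bseq (Suc i)))"
  proof (cases "even i")
    case True
    then show ?thesis unfolding rb by simp
  next
    case False
    then show ?thesis unfolding rb using le by simp
  qed
qed

lemma bseq_Scc: "bseq \<in> S_cc"
proof -
  let ?r = "\<lambda>i. real_of_rat (bseq i)"
  define P where "P n = (\<Sum>i<n. max 0 (?r i))" for n
  define N where "N n = (\<Sum>i<n. min 0 (?r i))" for n
  have t: "?r \<longlonglongrightarrow> 0"
    by (rule tendsto_rabs_zero_cancel) (simp only: rb_abs LIMSEQ_inverse_real_of_nat)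
  have s: "summable ?r"
    using alternating_harmonic_series_sums unfolding rb by (rule sums_summable)
  have PN: "P n - N n = harm n" for n
  proof -
    have "P n - N n = (\<Sum>i<n. max 0 (?r i) - min 0 (?r i))"
      unfolding P_def N_def by (simp add: sum_subtractf)
    also have "\<dots> = (\<Sum>i<n. \<bar>?r i\<bar>)" by (intro sum.cong refl) (rule mm)
    also have "\<dots> = harm n" unfolding rb_abs harm_altdef by simp
    finally show ?thesis .
  qed
  have r0: "?r 0 = 1" unfolding rb by simp
  have NP: "- N n \<le> P n" for n
  proof -
    have "- N n \<le> - N (Suc n)" unfolding N_def by simp
    also have "- N (Suc n) = (\<Sum>i<n. - min 0 (?r (Suc i)))"
      unfolding N_def sum.lessThan_Suc_shift using r0 by (simp add: sum_negf)
    also have "\<dots> \<le> P n" unfolding P_def by (rule sum_mono) (rule rb_pm(1))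
    finally show ?thesis .
  qed
  have PN2: "P n \<le> 1 - N n" for n
  proof -
    have "P n \<le> P (Suc n)" unfolding P_def by simp
    also have "P (Suc n) = 1 + (\<Sum>i<n. max 0 (?r (Suc i)))"
      unfolding P_def sum.lessThan_Suc_shift using r0 by simp
    also have "(\<Sum>i<n. max 0 (?r (Suc i))) \<le> - N n"
      unfolding N_def sum_negf[symmetric] by (rule sum_mono) (rule rb_pm(2))
    finally show ?thesis by simp
  qed
  have pos: "filterlim P at_top sequentially"
    unfolding filterlim_at_top
  proof
    fix z :: real
    have "eventually (\<lambda>n. 2 * z \<le> harm n) sequentially"
      using harm_at_top unfolding filterlim_at_top by blast
    then show "eventually (\<lambda>n. z \<le> P n) sequentially"
    proof (rule eventually_mono)
      fix n assume "2 * z \<le> (harm n :: real)"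
      then show "z \<le> P n" using PN[of n] NP[of n] by linarith
    qed
  qed
  have neg: "filterlim N at_bot sequentially"
    unfolding filterlim_at_bot
  proof
    fix z :: real
    have "eventually (\<lambda>n. 1 - 2 * z \<le> harm n) sequentially"
      using harm_at_top unfolding filterlim_at_top by blast
    then show "eventually (\<lambda>n. N n \<le> z) sequentially"
    proof (rule eventually_mono)
      fix n assume "1 - 2 * z \<le> (harm n :: real)"
      then show "N n \<le> z" using PN[of n] PN2[of n] by linarith
    qed
  qed
  show ?thesis unfolding S_cc_def using t s pos neg unfolding P_def N_def by blast
qed

lemma perturb_Scc:
  assumes a: "a \<in> S_cc" and c0: "\<And>i. 0 \<le> c i" and cs: "summable (\<lambda>i. real_of_rat (c i))"
  shows "(\<lambda>i. a i + c i) \<in> S_cc"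
proof -
  let ?a = "\<lambda>i. real_of_rat (a i)" and ?c = "\<lambda>i. real_of_rat (c i)"
  have a1: "?a \<longlonglongrightarrow> 0" and a2: "summable ?a"
    and a3: "filterlim (\<lambda>n. \<Sum>i<n. max 0 (?a i)) at_top sequentially"
    and a4: "filterlim (\<lambda>n. \<Sum>i<n. min 0 (?a i)) at_bot sequentially"
    using a unfolding S_cc_def by auto
  have cnn: "0 \<le> ?c i" for i using c0[of i] by simp
  have t: "(\<lambda>i. real_of_rat (a i + c i)) \<longlonglongrightarrow> 0"
    unfolding of_rat_add using tendsto_add[OF a1 summable_LIMSEQ_zero[OF cs]] by simp
  have s: "summable (\<lambda>i. real_of_rat (a i + c i))"
    unfolding of_rat_add by (rule summable_add[OF a2 cs])
  have p: "filterlim (\<lambda>n. \<Sum>i<n. max 0 (real_of_rat (a i + c i))) at_top sequentially"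
  proof (rule filterlim_at_top_mono[OF a3])
    show "eventually (\<lambda>n. (\<Sum>i<n. max 0 (?a i)) \<le> (\<Sum>i<n. max 0 (real_of_rat (a i + c i)))) sequentially"
      by (intro always_eventually allI sum_mono) (simp only: of_rat_add mx[OF cnn])
  qed
  define C where "C = suminf ?c"
  have sc: "(\<Sum>i<n. ?c i) \<le> C" for n
    unfolding C_def by (rule sum_le_suminf[OF cs]) (auto simp: c0)
  have n: "filterlim (\<lambda>n. \<Sum>i<n. min 0 (real_of_rat (a i + c i))) at_bot sequentially"
    unfolding filterlim_at_bot
  proof
    fix z :: real
    have "eventually (\<lambda>n. (\<Sum>i<n. min 0 (?a i)) \<le> z - C) sequentially"
      using a4 unfolding filterlim_at_bot by blast
    then show "eventually (\<lambda>n. (\<Sum>i<n. min 0 (real_of_rat (a i + c i))) \<le> z) sequentially"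
    proof (rule eventually_mono)
      fix n assume h: "(\<Sum>i<n. min 0 (?a i)) \<le> z - C"
      have "(\<Sum>i<n. min 0 (real_of_rat (a i + c i))) \<le> (\<Sum>i<n. min 0 (?a i) + ?c i)"
        by (rule sum_mono) (simp only: of_rat_add mn[OF cnn])
      also have "\<dots> = (\<Sum>i<n. min 0 (?a i)) + (\<Sum>i<n. ?c i)" by (rule sum.distrib)
      finally show "(\<Sum>i<n. min 0 (real_of_rat (a i + c i))) \<le> z" using h sc[of n] by linarith
    qed
  qed
  show ?thesis unfolding S_cc_def using t s p n by blast
qed



lemma exists_X:
  assumes a: "a \<in> S_cc"
  shows "\<exists>X\<in>infcoinf. subsums a X L"
proof -
  let ?r = "\<lambda>i. real_of_rat (a i)"
  have r0: "?r \<longlonglongrightarrow> 0"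
    and pos: "filterlim (\<lambda>n. \<Sum>i<n. max 0 (?r i)) at_top sequentially"
    and neg: "filterlim (\<lambda>n. \<Sum>i<n. min 0 (?r i)) at_bot sequentially"
    using a unfolding S_cc_def by auto
  obtain Z where Z: "infinite Z" "summable (\<lambda>i. if i \<in> Z then \<bar>?r i\<bar> else 0)"
    using mkZ[OF r0] by blast
  obtain X where X: "X \<inter> Z = {}" "infinite X" "(\<lambda>i. if i \<in> X then ?r i else 0) sums L"
    using greedy[OF r0 pos neg Z(2)] by blast
  have "Z \<subseteq> UNIV - X" using X(1) by blast
  then have "infinite (UNIV - X)" using Z(1) infinite_super by blast
  then have "X \<in> infcoinf" unfolding infcoinf_def using X(2) by blast
  moreover have "subsums a X L" using X(3) unfolding subsums_iff[OF X(2)] ind_def .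
  ultimately show ?thesis by blast
qed

definition sig :: "real \<Rightarrow> real" where "sig x = 3/2 + arctan x / pi"
definition gg :: "nat \<Rightarrow> real \<Rightarrow> nat" where "gg i x = nat \<lfloor>2^i * sig x\<rfloor>"
definition cc :: "real \<Rightarrow> nat \<Rightarrow> rat" where "cc x i = (1/3::rat)^(gg i x)"
definition fam :: "real \<Rightarrow> nat \<Rightarrow> rat" where "fam x i = bseq i + cc x i"

lemma sig_bounds: "1 < sig x" "sig x < 2"
proof -
  have "- (pi/2) < arctan x" "arctan x < pi/2" using arctan_bounded by auto
  then have "-(1/2) < arctan x / pi" "arctan x / pi < 1/2"
    using pi_gt_zero by (simp_all add: field_simps)
  then show "1 < sig x" "sig x < 2" unfolding sig_def by linarith+
qed

lemma sig_inj: "sig x = sig y \<Longrightarrow> x = y"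
  unfolding sig_def using pi_gt_zero by (simp add: arctan_eq_iff)

lemma gg_block: assumes "i < j" shows "gg i x < gg j y"
proof -
  have "(2::real)^i * sig x < 2^i * 2" using sig_bounds(2)[of x] by simp
  also have "\<dots> = 2^(Suc i)" by simp
  also have "\<dots> \<le> 2^j" using assms by (intro power_increasing) auto
  finally have a: "(2::real)^i * sig x < 2^j" .
  have b: "(2::real)^j \<le> 2^j * sig y" using sig_bounds(1)[of y] by simp
  have "\<lfloor>(2::real)^i * sig x\<rfloor> < (2::int)^j"
    using a by (metis floor_less_iff floor_of_int of_int_numeral of_int_power floor_le_iff le_floor_iff)
  moreover have "(2::int)^j \<le> \<lfloor>(2::real)^j * sig y\<rfloor>"
    using b by (simp add: le_floor_iff)
  moreover have "(1::real) \<le> 2^j * sig y" using b sig_bounds(1)[of y] by (smt (verit) one_le_power)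
  ultimately show ?thesis unfolding gg_def by simp
qed

lemma gg_mono: "strict_mono (\<lambda>i. gg i x)"
  by (rule strict_monoI) (rule gg_block)

lemma gg_ge: "i \<le> gg i x"
  using strict_mono_imp_increasing[OF gg_mono] by blast

lemma rcc: "real_of_rat (cc x i) = (1/3)^(gg i x)"
  unfolding cc_def by (simp add: of_rat_power of_rat_divide)

lemma cc_summable: "summable (\<lambda>i. real_of_rat (cc x i))"
proof (rule summable_comparison_test[where g="\<lambda>i. (1/3::real)^i"])
  show "\<exists>N. \<forall>n\<ge>N. norm (real_of_rat (cc x n)) \<le> (1/3)^n"
    unfolding rcc by (auto intro!: power_decreasing gg_ge)
qed simp

lemma fam_Scc: "fam x \<in> S_cc"
proof -
  have "(\<lambda>i. bseq i + cc x i) \<in> S_cc"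
    by (rule perturb_Scc[OF bseq_Scc _ cc_summable]) (simp add: cc_def)
  then show ?thesis unfolding fam_def[abs_def] .
qed

lemma Phi_sums: "ind Y (\<lambda>i. real_of_rat (cc x i)) sums tern ((\<lambda>i. gg i x) ` Y)"
proof -
  let ?h = "\<lambda>i. gg i x"
  let ?f = "\<lambda>k. if k \<in> ?h ` Y then (1/3::real)^k else 0"
  have inj: "inj ?h" using gg_mono by (rule strict_mono_imp_inj_on)
  have fs: "?f sums tern (?h ` Y)" unfolding tern_def using summable_tern by (rule summable_sums)
  have "(\<lambda>i. ?f (?h i)) sums tern (?h ` Y)"
    by (subst sums_mono_reindex[OF gg_mono]) (auto simp: fs)
  moreover have "?f (?h i) = ind Y (\<lambda>i. real_of_rat (cc x i)) i" for i
    unfolding ind_def rcc by (simp add: inj_image_mem_iff[OF inj])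
  ultimately show ?thesis by simp
qed

lemma Phi_inj:
  assumes Y: "infinite Y" and eq: "tern ((\<lambda>i. gg i x) ` Y) = tern ((\<lambda>i. gg i y) ` Y)"
  shows "x = y"
proof -
  have im: "(\<lambda>i. gg i x) ` Y = (\<lambda>i. gg i y) ` Y" using tern_inj eq by (rule injD)
  have close: "\<bar>sig x - sig y\<bar> < (1/2)^i" if "i \<in> Y" for i
  proof -
    have "gg i x \<in> (\<lambda>i. gg i y) ` Y" using im that by blast
    then obtain j where j: "j \<in> Y" "gg i x = gg j y" by blast
    have "i = j"
    proof (rule ccontr)
      assume "i \<noteq> j"
      then have "i < j \<or> j < i" by arith
      then show False using gg_block[of i j x y] gg_block[of j i y x] j(2) by auto
    qed
    then have eqg: "gg i x = gg i y" using j by simp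
    have p1: "0 \<le> \<lfloor>(2::real)^i * sig x\<rfloor>" using sig_bounds(1)[of x] by (simp add: le_floor_iff)
    have p2: "0 \<le> \<lfloor>(2::real)^i * sig y\<rfloor>" using sig_bounds(1)[of y] by (simp add: le_floor_iff)
    have fl: "\<lfloor>(2::real)^i * sig x\<rfloor> = \<lfloor>(2::real)^i * sig y\<rfloor>"
      using eqg p1 p2 unfolding gg_def by (simp add: nat_eq_iff2)
    have "\<bar>(2::real)^i * sig x - 2^i * sig y\<bar> < 1"
      using fl floor_correct[of "(2::real)^i * sig x"] floor_correct[of "(2::real)^i * sig y"]
      by linarith
    then have "(2::real)^i * \<bar>sig x - sig y\<bar> < 1"
      by (simp add: abs_mult right_diff_distrib[symmetric])
    then show ?thesis by (simp add: field_simps power_divide)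
  qed
  have "sig x = sig y"
  proof (rule ccontr)
    assume "sig x \<noteq> sig y"
    then have d: "0 < \<bar>sig x - sig y\<bar>" by simp
    obtain n where n: "(1/2::real)^n < \<bar>sig x - sig y\<bar>"
      using real_arch_pow_inv[OF d, of "1/2"] by auto
    obtain i where i: "i \<ge> n" "i \<in> Y" using Y unfolding infinite_nat_iff_unbounded_le by blast
    have "(1/2::real)^i \<le> (1/2)^n" using i(1) by (intro power_decreasing) auto
    then show False using close[OF i(2)] n by linarith
  qed
  then show ?thesis by (rule sig_inj)
qed



abbreviation rb' :: "nat \<Rightarrow> real" where "rb' \<equiv> (\<lambda>i. real_of_rat (bseq i))"

lemma ind_add: "ind X (\<lambda>i. f i + g i) = (\<lambda>i. ind X f i + ind X g i)"
  unfolding ind_def by auto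

lemma fam_ind: "ind X (\<lambda>i. real_of_rat (fam x i)) = (\<lambda>i. ind X rb' i + ind X (\<lambda>i. real_of_rat (cc x i)) i)"
  unfolding fam_def of_rat_add by (rule ind_add)

lemma fam_decomp:
  assumes "ind X (\<lambda>i. real_of_rat (fam x i)) sums L"
  shows "ind X rb' sums (L - tern ((\<lambda>i. gg i x) ` X))"
proof -
  have "(\<lambda>i. ind X (\<lambda>i. real_of_rat (fam x i)) i - ind X (\<lambda>i. real_of_rat (cc x i)) i) sums (L - tern ((\<lambda>i. gg i x) ` X))"
    by (rule sums_diff[OF assms Phi_sums])
  then show ?thesis unfolding fam_ind by simp
qed

lemma ind_UNIV: "ind UNIV f = f" unfolding ind_def by auto

lemma ind_split: "(\<lambda>i. ind X f i + ind (UNIV - X) f i) = f" unfolding ind_def by auto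

lemma Phi_split: "tern ((\<lambda>i. gg i x) ` UNIV) = tern ((\<lambda>i. gg i x) ` X) + tern ((\<lambda>i. gg i x) ` (UNIV - X))"
proof -
  have "(\<lambda>i. ind X (\<lambda>i. real_of_rat (cc x i)) i + ind (UNIV - X) (\<lambda>i. real_of_rat (cc x i)) i) sums
        (tern ((\<lambda>i. gg i x) ` X) + tern ((\<lambda>i. gg i x) ` (UNIV - X)))"
    by (rule sums_add[OF Phi_sums Phi_sums])
  then have "(\<lambda>i. real_of_rat (cc x i)) sums (tern ((\<lambda>i. gg i x) ` X) + tern ((\<lambda>i. gg i x) ` (UNIV - X)))"
    unfolding ind_split .
  moreover have "(\<lambda>i. real_of_rat (cc x i)) sums tern ((\<lambda>i. gg i x) ` UNIV)"
    using Phi_sums[of UNIV x] unfolding ind_UNIV .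
  ultimately show ?thesis using sums_unique2 by blast
qed

lemma fam_total: "(\<Sum>i. real_of_rat (fam x i)) = (\<Sum>i. rb' i) + tern ((\<lambda>i. gg i x) ` UNIV)"
proof -
  have sb: "summable rb'" using bseq_Scc unfolding S_cc_def by auto
  have "(\<lambda>i. rb' i + real_of_rat (cc x i)) sums ((\<Sum>i. rb' i) + tern ((\<lambda>i. gg i x) ` UNIV))"
    using sums_add[OF summable_sums[OF sb] Phi_sums[of UNIV x]] unfolding ind_UNIV .
  then show ?thesis unfolding fam_def of_rat_add by (rule sums_unique[symmetric])
qed

lemma infcoinf_D: "X \<in> infcoinf \<Longrightarrow> infinite X" "X \<in> infcoinf \<Longrightarrow> infinite (UNIV - X)"
  unfolding infcoinf_def by auto

lemma lower_e:
  assumes "good_e F"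
  shows "(UNIV :: real set) \<lesssim> F"
proof -
  have "\<forall>x. \<exists>X. X \<in> F \<and> subsums (fam x) X (\<Sum>i. real_of_rat (fam x i))"
    using assms fam_Scc unfolding good_e_def by blast
  then obtain f where f: "\<And>x. f x \<in> F" "\<And>x. subsums (fam x) (f x) (\<Sum>i. real_of_rat (fam x i))"
    by metis
  have fic: "f x \<in> infcoinf" for x using f(1) assms unfolding good_e_def by blast
  have key: "suminf (ind (f x) rb') = (\<Sum>i. rb' i) + tern ((\<lambda>i. gg i x) ` (UNIV - f x))" for x
  proof -
    have "ind (f x) (\<lambda>i. real_of_rat (fam x i)) sums (\<Sum>i. real_of_rat (fam x i))"
      using f(2)[of x] subsums_iff[OF infcoinf_D(1)[OF fic]] by simp
    from fam_decomp[OF this] have "suminf (ind (f x) rb') = (\<Sum>i. real_of_rat (fam x i)) - tern ((\<lambda>i. gg i x) ` f x)"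
      by (rule sums_unique[symmetric])
    then show ?thesis unfolding fam_total using Phi_split[of x "f x"] by simp
  qed
  have "inj f"
  proof (rule injI)
    fix x y assume e: "f x = f y"
    have "tern ((\<lambda>i. gg i x) ` (UNIV - f x)) = tern ((\<lambda>i. gg i y) ` (UNIV - f x))"
      using key[of x] key[of y] e by simp
    then show "x = y" by (rule Phi_inj[OF infcoinf_D(2)[OF fic]])
  qed
  then show ?thesis unfolding lepoll_def using f(1) by blast
qed

lemma real_infinite: "infinite (UNIV :: real set)"
  by (rule infinite_UNIV_char_0)

lemma lower_l:
  assumes "good_l A F" and A: "A \<prec> (UNIV :: real set)"
  shows "(UNIV :: real set) \<lesssim> F"
proof (rule ccontr)
  assume nF: "\<not> (UNIV :: real set) \<lesssim> F"
  have "\<forall>x. \<exists>p. p \<in> F \<times> A \<and> subsums (fam x) (fst p) (snd p)"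
    using assms(1) fam_Scc unfolding good_l_def by fastforce
  then obtain f where f: "\<And>x. f x \<in> F \<times> A" "\<And>x. subsums (fam x) (fst (f x)) (snd (f x))"
    by metis
  have fic: "fst (f x) \<in> infcoinf" for x using f(1) assms(1) unfolding good_l_def by (auto simp: mem_Times_iff)
  have key: "suminf (ind (fst (f x)) rb') = snd (f x) - tern ((\<lambda>i. gg i x) ` fst (f x))" for x
  proof -
    have "ind (fst (f x)) (\<lambda>i. real_of_rat (fam x i)) sums snd (f x)"
      using f(2)[of x] subsums_iff[OF infcoinf_D(1)[OF fic]] by simp
    from fam_decomp[OF this] show ?thesis by (rule sums_unique[symmetric])
  qed
  have "inj f"
  proof (rule injI)
    fix x y assume e: "f x = f y"
    have "tern ((\<lambda>i. gg i x) ` fst (f x)) = tern ((\<lambda>i. gg i y) ` fst (f x))"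
      using key[of x] key[of y] e by simp
    then show "x = y" by (rule Phi_inj[OF infcoinf_D(1)[OF fic]])
  qed
  then have U: "(UNIV :: real set) \<lesssim> F \<times> A" unfolding lepoll_def using f(1) by blast
  have "F \<lesssim> (UNIV :: real set)" by (rule natset_lepoll_real)
  moreover have "\<not> F \<approx> (UNIV :: real set)"
    using nF eqpoll_sym eqpoll_imp_lepoll by blast
  ultimately have "F \<prec> (UNIV :: real set)" unfolding lesspoll_def by blast
  then have "F \<times> A \<prec> (UNIV :: real set)" using A real_infinite by (rule times_lesspoll)
  then have "(UNIV :: real set) \<prec> (UNIV :: real set)" using U by (rule lesspoll_trans1[rotated])
  then show False by simp
qed

lemma infcoinf_good_e: "good_e infcoinf"
  unfolding good_e_def using exists_X by blast

lemma infcoinf_good_l: "A \<noteq> {} \<Longrightarrow> good_l A infcoinf"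
  unfolding good_l_def using exists_X by blast

lemma infcoinf_eqpoll: "infcoinf \<approx> (UNIV :: real set)"
  by (rule lepoll_antisym[OF natset_lepoll_real lower_e[OF infcoinf_good_e]])

lemma part1: "least_card_is_c good_e"
  unfolding least_card_is_c_def using infcoinf_good_e infcoinf_eqpoll lower_e by blast

lemma part2: "A \<noteq> {} \<Longrightarrow> A \<prec> (UNIV :: real set) \<Longrightarrow> least_card_is_c (good_l A)"
  unfolding least_card_is_c_def using infcoinf_good_l infcoinf_eqpoll lower_l by blast



definition cp :: "rat \<Rightarrow> nat \<Rightarrow> rat" where "cp d i = d * (1/2)^(Suc i)"

lemma rcp: "real_of_rat (cp d i) = real_of_rat d * (1/2)^(Suc i)"
  unfolding cp_def by (simp add: of_rat_mult of_rat_power of_rat_divide)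

lemma cp_sums: "(\<lambda>i. real_of_rat (cp d i)) sums real_of_rat d"
proof -
  have "(\<lambda>i. (1/2::real)^(Suc i)) sums 1"
    using geometric_sums[of "1/2::real"] sums_mult[of "\<lambda>i. (1/2::real)^i" 2 "1/2"] by simp
  then have "(\<lambda>i. real_of_rat d * (1/2::real)^(Suc i)) sums (real_of_rat d * 1)" by (rule sums_mult)
  then show ?thesis unfolding rcp by simp
qed

lemma cp_part:
  assumes X: "X \<in> infcoinf" and d: "0 < d"
  shows "0 < suminf (ind X (\<lambda>i. real_of_rat (cp d i)))"
    "suminf (ind X (\<lambda>i. real_of_rat (cp d i))) < real_of_rat d"
    "summable (ind X (\<lambda>i. real_of_rat (cp d i)))"
proof -
  let ?c = "\<lambda>i. real_of_rat (cp d i)"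
  have cpos: "0 < ?c i" for i unfolding rcp using d by simp
  have sc: "summable ?c" using cp_sums by (rule sums_summable)
  have cnn: "0 \<le> ?c n" for n using cpos[of n] by linarith
  have nb: "norm (ind Z ?c n) \<le> ?c n" for Z n
  proof (cases "n \<in> Z")
    case True
    then show ?thesis unfolding ind_def real_norm_def using abs_of_nonneg[OF cnn[of n]] by simp
  next
    case False
    then show ?thesis unfolding ind_def using cnn[of n] by simp
  qed
  have s1: "summable (ind Z ?c)" for Z
    by (rule summable_comparison_test[OF _ sc]) (use nb in blast)
  obtain i where i: "i \<in> X" using infinite_imp_nonempty[OF infcoinf_D(1)[OF X]] by blast
  obtain j where j: "j \<in> UNIV - X" using infinite_imp_nonempty[OF infcoinf_D(2)[OF X]] by blast
  have pos: "0 < suminf (ind Z ?c)" if "k \<in> Z" for Z k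
    by (rule suminf_pos2[OF s1, of _ k]) (use that cpos less_imp_le[OF cpos] in \<open>auto simp: ind_def\<close>)
  have "(\<lambda>i. ind X ?c i + ind (UNIV - X) ?c i) sums (suminf (ind X ?c) + suminf (ind (UNIV - X) ?c))"
    by (rule sums_add[OF summable_sums[OF s1] summable_sums[OF s1]])
  then have "?c sums (suminf (ind X ?c) + suminf (ind (UNIV - X) ?c))" unfolding ind_split .
  then have tot: "suminf (ind X ?c) + suminf (ind (UNIV - X) ?c) = real_of_rat d"
    using cp_sums sums_unique2 by blast
  show "0 < suminf (ind X ?c)" using pos[OF i] .
  show "suminf (ind X ?c) < real_of_rat d" using pos[OF j] tot by linarith
  show "summable (ind X ?c)" by (rule s1)
qed

lemma pair_Scc: assumes "0 < d" shows "(\<lambda>i. bseq i + cp d i) \<in> S_cc"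
  by (rule perturb_Scc[OF bseq_Scc _ sums_summable[OF cp_sums]]) (simp add: cp_def assms less_imp_le)

lemma pair_ne: "0 < d \<Longrightarrow> bseq \<noteq> (\<lambda>i. bseq i + cp d i)"
proof
  assume "0 < d" "bseq = (\<lambda>i. bseq i + cp d i)"
  then have "bseq 0 = bseq 0 + cp d 0" by metis
  then show False using \<open>0 < d\<close> by (simp add: cp_def)
qed

lemma pair_card: "0 < d \<Longrightarrow> finite {bseq, (\<lambda>i. bseq i + cp d i)} \<and> card {bseq, (\<lambda>i. bseq i + cp d i)} = 2"
  using pair_ne by auto

lemma pair_diff:
  assumes X: "X \<in> infcoinf" and d: "0 < d"
    and s1: "subsums bseq X L1" and s2: "subsums (\<lambda>i. bseq i + cp d i) X L2"
  shows "0 < L2 - L1" "L2 - L1 < real_of_rat d"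
proof -
  have iX: "infinite X" using infcoinf_D(1)[OF X] .
  have a: "ind X rb' sums L1" using s1 subsums_iff[OF iX] by simp
  have b: "ind X (\<lambda>i. rb' i + real_of_rat (cp d i)) sums L2"
    using s2 subsums_iff[OF iX] by (simp add: of_rat_add)
  have "(\<lambda>i. ind X (\<lambda>i. rb' i + real_of_rat (cp d i)) i - ind X rb' i) sums (L2 - L1)"
    by (rule sums_diff[OF b a])
  then have "ind X (\<lambda>i. real_of_rat (cp d i)) sums (L2 - L1)"
    unfolding ind_add by simp
  then have "suminf (ind X (\<lambda>i. real_of_rat (cp d i))) = L2 - L1" by (rule sums_unique[symmetric])
  then show "0 < L2 - L1" "L2 - L1 < real_of_rat d" using cp_part[OF X d] by auto
qed

lemma some_infcoinf: "\<exists>X. X \<in> infcoinf"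
  using exists_X[OF bseq_Scc] by blast

lemma small_not_good:
  assumes P: "\<And>a. a \<in> S_cc \<Longrightarrow> \<exists>X\<in>infcoinf. Q a X"
    and F: "F \<subseteq> S_cc" "finite F" "card F < 2"
  shows "\<exists>X\<in>infcoinf. \<forall>a\<in>F. Q a X"
proof -
  have "card F = 0 \<or> card F = 1" using F(3) by arith
  then show ?thesis
  proof
    assume "card F = 0"
    then have "F = {}" using F(2) by simp
    then show ?thesis using some_infcoinf by blast
  next
    assume "card F = 1"
    then obtain a where "F = {a}" by (auto simp: card_1_singleton_iff)
    then show ?thesis using P F(1) by auto
  qed
qed

lemma part3: "least_card_is_2 good_e_perp"
  unfolding least_card_is_2_def
proof (intro conjI allI impI)
  let ?d = "1::rat"
  let ?F = "{bseq, (\<lambda>i. bseq i + cp ?d i)}"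
  have "good_e_perp ?F"
    unfolding good_e_perp_def
  proof (intro conjI)
    show "?F \<subseteq> S_cc" using bseq_Scc pair_Scc[of ?d] by simp
    show "\<not> (\<exists>X\<in>infcoinf. \<forall>a\<in>?F. subsums a X (\<Sum>i. real_of_rat (a i)))"
    proof
      assume "\<exists>X\<in>infcoinf. \<forall>a\<in>?F. subsums a X (\<Sum>i. real_of_rat (a i))"
      then obtain X where X: "X \<in> infcoinf" "subsums bseq X (\<Sum>i. rb' i)"
        "subsums (\<lambda>i. bseq i + cp ?d i) X (\<Sum>i. real_of_rat (bseq i + cp ?d i))" by auto
      have sb: "summable rb'" using bseq_Scc unfolding S_cc_def by auto
      have "(\<Sum>i. real_of_rat (bseq i + cp ?d i)) = (\<Sum>i. rb' i) + real_of_rat ?d"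
        unfolding of_rat_add by (rule sums_unique[symmetric], rule sums_add[OF summable_sums[OF sb] cp_sums])
      then show False using pair_diff[OF X(1) _ X(2) X(3)] by simp
    qed
  qed
  then show "\<exists>F. good_e_perp F \<and> finite F \<and> card F = 2" using pair_card[of ?d] by auto
next
  fix F :: "(nat \<Rightarrow> rat) set"
  assume g: "good_e_perp F"
  show "infinite F \<or> 2 \<le> card F"
  proof (rule ccontr)
    assume "\<not> (infinite F \<or> 2 \<le> card F)"
    then have "finite F" "card F < 2" by auto
    moreover have "F \<subseteq> S_cc" using g unfolding good_e_perp_def by blast
    ultimately have "\<exists>X\<in>infcoinf. \<forall>a\<in>F. subsums a X (\<Sum>i. real_of_rat (a i))"
      using small_not_good[where Q="\<lambda>a X. subsums a X (\<Sum>i. real_of_rat (a i))"] exists_X by blast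
    then show False using g unfolding good_e_perp_def by blast
  qed
qed

lemma choose_d:
  fixes B :: "real set"
  assumes "finite B"
  shows "\<exists>d::rat. 0 < d \<and> (\<forall>p\<in>B. \<forall>q\<in>B. 0 < p - q \<longrightarrow> real_of_rat d < p - q)"
proof -
  define D where "D = {p - q | p q. p \<in> B \<and> q \<in> B \<and> 0 < p - q}"
  have fD: "finite D"
  proof -
    have "D \<subseteq> (\<lambda>(p, q). p - q) ` (B \<times> B)" unfolding D_def by auto
    then show ?thesis using assms finite_subset by blast
  qed
  show ?thesis
  proof (cases "D = {}")
    case True
    then show ?thesis unfolding D_def by (intro exI[of _ 1]) auto
  next
    case False
    define m where "m = Min D"
    have "m \<in> D" unfolding m_def using fD False by (rule Min_in)
    then have m0: "0 < m" unfolding D_def by auto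
    obtain n where n: "inverse (real (Suc n)) < m" using reals_Archimedean[OF m0] by blast
    have "real_of_rat (1 / of_nat (Suc n)) = inverse (real (Suc n))"
      by (simp add: of_rat_divide of_rat_inverse of_rat_add divide_inverse)
    moreover have "\<forall>p\<in>B. \<forall>q\<in>B. 0 < p - q \<longrightarrow> m \<le> p - q"
      unfolding m_def using fD by (auto simp: D_def intro!: Min_le)
    ultimately show ?thesis using n
      by (intro exI[of _ "1 / of_nat (Suc n)"]) (auto intro: less_le_trans)
  qed
qed

lemma part4: "B \<noteq> {} \<Longrightarrow> finite B \<Longrightarrow> least_card_is_2 (good_l_perp B)"
  unfolding least_card_is_2_def
proof (intro conjI allI impI)
  assume fB: "finite B" and nB: "B \<noteq> {}"
  obtain d where d: "0 < d" "\<And>p q. p \<in> B \<Longrightarrow> q \<in> B \<Longrightarrow> 0 < p - q \<Longrightarrow> real_of_rat d < p - q"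
    using choose_d[OF fB] by blast
  let ?F = "{bseq, (\<lambda>i. bseq i + cp d i)}"
  have "good_l_perp B ?F"
    unfolding good_l_perp_def
  proof (intro conjI)
    show "?F \<subseteq> S_cc" using bseq_Scc pair_Scc[OF d(1)] by simp
    show "\<not> (\<exists>X\<in>infcoinf. \<forall>a\<in>?F. \<exists>L\<in>B. subsums a X L)"
    proof
      assume "\<exists>X\<in>infcoinf. \<forall>a\<in>?F. \<exists>L\<in>B. subsums a X L"
      then obtain X L1 L2 where X: "X \<in> infcoinf" "L1 \<in> B" "subsums bseq X L1"
        "L2 \<in> B" "subsums (\<lambda>i. bseq i + cp d i) X L2" by auto
      have "0 < L2 - L1" "L2 - L1 < real_of_rat d" using pair_diff[OF X(1) d(1) X(3) X(5)] by auto
      then show False using d(2)[OF X(4) X(2)] by linarith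
    qed
  qed
  then show "\<exists>F. good_l_perp B F \<and> finite F \<and> card F = 2" using pair_card[OF d(1)] by auto
next
  fix F :: "(nat \<Rightarrow> rat) set"
  assume nB: "B \<noteq> {}" and g: "good_l_perp B F"
  then obtain L where L: "L \<in> B" by blast
  show "infinite F \<or> 2 \<le> card F"
  proof (rule ccontr)
    assume "\<not> (infinite F \<or> 2 \<le> card F)"
    then have "finite F" "card F < 2" by auto
    moreover have "F \<subseteq> S_cc" using g unfolding good_l_perp_def by blast
    moreover have "\<And>a. a \<in> S_cc \<Longrightarrow> \<exists>X\<in>infcoinf. \<exists>L\<in>B. subsums a X L"
      using exists_X L by blast
    ultimately have "\<exists>X\<in>infcoinf. \<forall>a\<in>F. \<exists>L\<in>B. subsums a X L"
      using small_not_good[where Q="\<lambda>a X. \<exists>L\<in>B. subsums a X L"] by blast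
    then show False using g unfolding good_l_perp_def by blast
  qed
qed

theorem mainTheorem9:
  shows "least_card_is_c good_e
       \<and> (\<forall>A :: real set. A \<noteq> {} \<and> A \<prec> (UNIV :: real set) \<longrightarrow> least_card_is_c (good_l A))
       \<and> least_card_is_2 good_e_perp
       \<and> (\<forall>B :: real set. B \<noteq> {} \<and> finite B \<longrightarrow> least_card_is_2 (good_l_perp B))"
  using part1 part2 part3 part4 by blast

end
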